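(* Let $E\subseteq\mathbb{R}$, let $f:E\to\mathbb{R}$ be Abel continuous on $E$, and let $F\subseteq E$ be Abel sequentially compact. Then $f(F)$ is Abel sequentially compact.
   Context: A sequence $(p_n)_{n\ge0}$ is Abel convergent to $\ell$ if $\sum_{k=0}^{\infty}p_k x^k$ converges for every $0\le x<1$ and $\lim_{x\to 1^-}(1-x)\sum_{k=0}^{\infty}p_k x^k=\ell$. $f$ is Abel continuous on $E$ if for every sequence $(p_n)$ in $E$ Abel convergent to some $\ell\in E$, $(f(p_n))$ is Abel convergent to $f(\ell)$. A subset $F\subseteq\mathbb{R}$ is Abel sequentially compact if every sequence of points of $F$ has a subsequence $(r_k)$ that is Abel convergent to a limit belonging to $F$. *)

theory Defs
  imports "HOL-Analysis.Analysis"
begin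

definition abel_convergent :: "(nat \<Rightarrow> real) \<Rightarrow> real \<Rightarrow> bool" where
  "abel_convergent p l \<longleftrightarrow>
     (\<forall>x. 0 \<le> x \<and> x < 1 \<longrightarrow> summable (\<lambda>k. p k * x ^ k)) \<and>
     ((\<lambda>x. (1 - x) * (\<Sum>k. p k * x ^ k)) \<longlongrightarrow> l) (at_left 1)"

definition abel_continuous_on :: "real set \<Rightarrow> (real \<Rightarrow> real) \<Rightarrow> bool" where
  "abel_continuous_on E f \<longleftrightarrow>
     (\<forall>(p::nat \<Rightarrow> real) l. (\<forall>n. p n \<in> E) \<and> l \<in> E \<and> abel_convergent p l
        \<longrightarrow> abel_convergent (\<lambda>n. f (p n)) (f l))"

definition abel_seq_compact :: "real set \<Rightarrow> bool" where
  "abel_seq_compact F \<longleftrightarrow>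
     (\<forall>p::nat \<Rightarrow> real. (\<forall>n. p n \<in> F) \<longrightarrow>
        (\<exists>(r::nat \<Rightarrow> nat) l. strict_mono r \<and> l \<in> F \<and> abel_convergent (p \<circ> r) l))"

end

theory Submission
  imports Defs
begin

theorem theorem11:
  fixes E F :: "real set" and f :: "real \<Rightarrow> real"
  assumes "abel_continuous_on E f"
    and "F \<subseteq> E"
    and "abel_seq_compact F"
  shows "abel_seq_compact (f ` F)"
  unfolding abel_seq_compact_def
proof (intro allI impI)
  fix q :: "nat \<Rightarrow> real"
  assume q: "\<forall>n. q n \<in> f ` F"
  define p where "p n = (SOME x. x \<in> F \<and> f x = q n)" for n
  have p: "p n \<in> F \<and> f (p n) = q n" for n
    unfolding p_def using q by (metis (mono_tags, lifting) imageE someI)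
  obtain r l where r: "strict_mono r" "l \<in> F" "abel_convergent (p \<circ> r) l"
    using assms(3) p unfolding abel_seq_compact_def by blast
  have "abel_convergent (\<lambda>n. f ((p \<circ> r) n)) (f l)"
  proof -
    have "\<forall>n. (p \<circ> r) n \<in> E" using p assms(2) by auto
    moreover have "l \<in> E" using r(2) assms(2) by auto
    ultimately show ?thesis using assms(1) r(3) unfolding abel_continuous_on_def by blast
  qed
  moreover have "(\<lambda>n. f ((p \<circ> r) n)) = q \<circ> r" using p by auto
  ultimately show "\<exists>r l. strict_mono r \<and> l \<in> f ` F \<and> abel_convergent (q \<circ> r) l"
    using r by auto
qed

end
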